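(* In the setting below, fix $k,d\in\mathbb N$, let $\omega$ be the smallest integer with $2\omega\ge\max\{\deg f,\deg g_1,\ldots,\deg g_m\}$, and assume $2\omega\le d_{\max}$. Let $((\boldsymbol\theta^{*\ell})_{\ell=1}^p,\mathbf y^* )$ be an optimal solution of the dual program defining $\tilde q^k_d$. If $\operatorname{rank}\mathbf M_\omega(\boldsymbol\theta^{*\ell})=1$ for every $\ell=1,\ldots,p$, then $\tilde q^k_d=f^*$ and $\mathbf x^*:=(y^*_{e_1},\ldots,y^*_{e_n})$ (where $e_i$ is the $i$-th unit multi-index) is an optimal solution of (P).
   Context: Problem (P): $f^*=\min\{f(\mathbf x):\mathbf x\in\mathbf K\}$ with $\mathbf K=\{\mathbf x\in\mathbb R^n:0\le g_j(\mathbf x)\le 1,\ j=1,\ldots,m\}$, $f,g_j\in\mathbb R[\mathbf x]$ ($f^*=+\infty$ if $\mathbf K=\emptyset$). $\mathbb R[\mathbf x;I]$ is the ring of polynomials in $\{x_i:i\in I\}$. Sparsity Assumption: there are $p\in\mathbb N$ and sets $I_\ell\subseteq\{1,\ldots,n\}$, $J_\ell\subseteq\{1,\ldots,m\}$ with $f=\sum_\ell f^\ell$ for some $f^\ell\in\mathbb R[\mathbf x;I_\ell]$, $g_j\in\mathbb R[\mathbf x;I_\ell]$ for $j\in J_\ell$, $\bigcup_\ell I_\ell=\{1,\ldots,n\}$, $\bigcup_\ell J_\ell=\{1,\ldots,m\}$, and for every $\ell\le p-1$ some $s\le\ell$ with $I_{\ell+1}\cap\bigcup_{r\le\ell}I_r\subseteq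 I_s$. $h_{\alpha\beta}=\prod_j g_j^{\alpha_j}(1-g_j)^{\beta_j}$; $N^\ell_d=\{(\alpha,\beta)\in\mathbb N_0^m\times\mathbb N_0^m:\mathrm{supp}(\alpha)\cup\mathrm{supp}(\beta)\subseteq J_\ell,\ \sum_j(\alpha_j+\beta_j)\le d\}$; $d_{\max}=\max\{\deg f,2k,d\max_j\deg g_j\}$. Let $\mathcal I_\ell=\{\gamma\in\mathbb N_0^n:|\gamma|\le d_{\max},\ \mathrm{supp}(\gamma)\subseteq I_\ell\}$, $\Gamma=\bigcup_\ell\mathcal I_\ell$. For a sequence $\boldsymbol\theta=(\theta_\gamma)$, $L_{\boldsymbol\theta}(\sum_\gamma q_\gamma\mathbf x^\gamma)=\sum_\gamma q_\gamma\theta_\gamma$, and for $t$ with $2t\le d_{\max}$, $\mathbf M_t(\boldsymbol\theta^\ell)$ is the matrix indexed by $\alpha,\beta\in\mathcal I_\ell$ with $|\alpha|,|\beta|\le t$, with entries $\theta^\ell_{\alpha+\beta}$. Dual program: $\tilde q^k_d=\inf\{L_{\mathbf y}(f):\mathbf y=(y_\gamma)_{\gamma\in\Gamma},\ \boldsymbol\theta^\ell=(\theta^\ell_\gamma)_{\gamma\in\mathcal I_\ell},\ y_\gamma=\theta^\ell_\gamma\ \forall\ell,\ \gamma\in\mathcal I_\ell,\ y_0=1,\ \mathbf M_k(\boldsymbol\theta^\ell)\succeq0,\ L_{\boldsymbol\theta^\ell}(h_{\alpha\beta})\ge0\ \forall(\alpha,\beta)\in N^\ell_d,\ \ell=1,\ldots,p\}$.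 *)

theory Defs
  imports "Jordan_Normal_Form.DL_Rank" "HOL-Library.Poly_Mapping" "HOL-Library.Extended_Real"
begin

text \<open>Multivariate real polynomials in the variables x_1, x_2, ... are represented as
finitely supported maps from monomial exponents (finitely supported nat => nat maps)
to real coefficients; the ring structure is the convolution ring of Poly_Mapping.\<close>

type_synonym mono = "nat \<Rightarrow>\<^sub>0 nat"
type_synonym mpoly = "mono \<Rightarrow>\<^sub>0 real"

definition mdeg :: "mono \<Rightarrow> nat" where
  "mdeg \<gamma> = (\<Sum>i\<in>Poly_Mapping.keys \<gamma>. Poly_Mapping.lookup \<gamma> i)"

definition pvars :: "mpoly \<Rightarrow> nat set" where
  "pvars q = (\<Union>\<gamma>\<in>Poly_Mapping.keys q. Poly_Mapping.keys \<gamma>)"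

definition pdeg :: "mpoly \<Rightarrow> nat" where
  "pdeg q = Max (insert 0 (mdeg ` Poly_Mapping.keys q))"

definition peval :: "mpoly \<Rightarrow> (nat \<Rightarrow> real) \<Rightarrow> real" where
  "peval q x = (\<Sum>\<gamma>\<in>Poly_Mapping.keys q. Poly_Mapping.lookup q \<gamma> * (\<Prod>i\<in>Poly_Mapping.keys \<gamma>. x i ^ Poly_Mapping.lookup \<gamma> i))"

definition Lfun :: "(mono \<Rightarrow> real) \<Rightarrow> mpoly \<Rightarrow> real" where
  "Lfun \<theta> q = (\<Sum>\<gamma>\<in>Poly_Mapping.keys q. Poly_Mapping.lookup q \<gamma> * \<theta> \<gamma>)"

definition hab :: "nat \<Rightarrow> (nat \<Rightarrow> mpoly) \<Rightarrow> (nat \<Rightarrow> nat) \<Rightarrow> (nat \<Rightarrow> nat) \<Rightarrow> mpoly" where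
  "hab m g \<alpha> \<beta> = (\<Prod>j\<in>{1..m}. g j ^ \<alpha> j * (1 - g j) ^ \<beta> j)"

definition Nset :: "nat set \<Rightarrow> nat \<Rightarrow> ((nat \<Rightarrow> nat) \<times> (nat \<Rightarrow> nat)) set" where
  "Nset J d = {(\<alpha>, \<beta>). {j. \<alpha> j \<noteq> 0} \<union> {j. \<beta> j \<noteq> 0} \<subseteq> J \<and> (\<Sum>j\<in>J. \<alpha> j + \<beta> j) \<le> d}"

definition dmax :: "mpoly \<Rightarrow> (nat \<Rightarrow> mpoly) \<Rightarrow> nat \<Rightarrow> nat \<Rightarrow> nat \<Rightarrow> nat" where
  "dmax f g m k d = max (pdeg f) (max (2 * k) (d * Max (insert 0 (pdeg ` g ` {1..m}))))"

definition Iset :: "nat set \<Rightarrow> nat \<Rightarrow> mono set" where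
  "Iset I D = {\<gamma>. mdeg \<gamma> \<le> D \<and> Poly_Mapping.keys \<gamma> \<subseteq> I}"

definition mom_psd :: "nat set \<Rightarrow> nat \<Rightarrow> (mono \<Rightarrow> real) \<Rightarrow> bool" where
  "mom_psd I t \<theta> \<longleftrightarrow> (\<forall>v :: mono \<Rightarrow> real.
      0 \<le> (\<Sum>\<alpha>\<in>Iset I t. \<Sum>\<beta>\<in>Iset I t. v \<alpha> * \<theta> (\<alpha> + \<beta>) * v \<beta>))"

definition mom_mat :: "nat set \<Rightarrow> nat \<Rightarrow> (mono \<Rightarrow> real) \<Rightarrow> real mat" where
  "mom_mat I t \<theta> = (let xs = sorted_list_of_set (Iset I t)
     in mat (length xs) (length xs) (\<lambda>(i, j). \<theta> (xs ! i + xs ! j)))"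

definition mom_rank :: "nat set \<Rightarrow> nat \<Rightarrow> (mono \<Rightarrow> real) \<Rightarrow> nat" where
  "mom_rank I t \<theta> = vec_space.rank (card (Iset I t)) (mom_mat I t \<theta>)"

definition dual_feasible ::
  "nat \<Rightarrow> (nat \<Rightarrow> nat set) \<Rightarrow> (nat \<Rightarrow> nat set) \<Rightarrow> mpoly \<Rightarrow> (nat \<Rightarrow> mpoly) \<Rightarrow> nat \<Rightarrow> nat \<Rightarrow> nat
   \<Rightarrow> (nat \<Rightarrow> mono \<Rightarrow> real) \<Rightarrow> (mono \<Rightarrow> real) \<Rightarrow> bool" where
  "dual_feasible p I J f g m k d \<theta> y \<longleftrightarrow>
     (\<forall>l\<in>{1..p}. \<forall>\<gamma>\<in>Iset (I l) (dmax f g m k d). y \<gamma> = \<theta> l \<gamma>) \<and>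
     y 0 = 1 \<and>
     (\<forall>l\<in>{1..p}. mom_psd (I l) k (\<theta> l)) \<and>
     (\<forall>l\<in>{1..p}. \<forall>(\<alpha>, \<beta>)\<in>Nset (J l) d. 0 \<le> Lfun (\<theta> l) (hab m g \<alpha> \<beta>))"

definition qtilde ::
  "nat \<Rightarrow> (nat \<Rightarrow> nat set) \<Rightarrow> (nat \<Rightarrow> nat set) \<Rightarrow> mpoly \<Rightarrow> (nat \<Rightarrow> mpoly) \<Rightarrow> nat \<Rightarrow> nat \<Rightarrow> nat \<Rightarrow> ereal" where
  "qtilde p I J f g m k d =
     (INF (\<theta>, y) \<in> {(\<theta>, y). dual_feasible p I J f g m k d \<theta> y}. ereal (Lfun y f))"

text \<open>Feasible set K of (P), as points of R^n (coordinates 1..n; other coordinates are 0).\<close>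
definition Kset :: "nat \<Rightarrow> nat \<Rightarrow> (nat \<Rightarrow> mpoly) \<Rightarrow> (nat \<Rightarrow> real) set" where
  "Kset n m g = {x. (\<forall>i. i \<notin> {1..n} \<longrightarrow> x i = 0) \<and>
      (\<forall>j\<in>{1..m}. 0 \<le> peval (g j) x \<and> peval (g j) x \<le> 1)}"

text \<open>f^* (= +infinity if K is empty).\<close>
definition fstar :: "nat \<Rightarrow> nat \<Rightarrow> mpoly \<Rightarrow> (nat \<Rightarrow> mpoly) \<Rightarrow> ereal" where
  "fstar n m f g = (INF x \<in> Kset n m g. ereal (peval f x))"

definition omega :: "nat \<Rightarrow> mpoly \<Rightarrow> (nat \<Rightarrow> mpoly) \<Rightarrow> nat" where
  "omega m f g = (LEAST w. max (pdeg f) (Max (insert 0 (pdeg ` g ` {1..m}))) \<le> 2 * w)"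

end

theory Submission imports Defs begin

lemma rank1_entries:
  fixes A :: "real mat"
  assumes A: "A \<in> carrier_mat n n" and r: "vec_space.rank n A = 1" and i0: "i0 < n"
    and nz: "A $$ (i0,i0) \<noteq> 0" and i: "i < n" and j: "j < n"
  shows "A $$ (i,j) * A $$ (i0,i0) = A $$ (i,i0) * A $$ (i0,j)"
proof -
  interpret vec_space "TYPE(real)" n .
  define u where "u = col A i0"
  define v where "v = col A j"
  have uc: "u \<in> carrier_vec n" using A i0 u_def by auto
  have vc: "v \<in> carrier_vec n" using A j v_def by auto
  have u0: "u $ i0 \<noteq> 0" using nz A i0 u_def by auto
  have uz: "u \<noteq> 0\<^sub>v n" using u0 i0 by auto
  have ind0: "lin_indpt {}" unfolding lin_dep_def by auto
  have "u \<notin> span {}" using uz span_empty by auto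
  hence indu: "lin_indpt {u}" using lin_dep_iff_in_span[of "{}" u] ind0 uc by auto
  have "v \<in> span {u}"
  proof (rule ccontr)
    assume nv: "v \<notin> span {u}"
    have "v \<noteq> u" using nv in_own_span[of "{u}"] uc by auto
    hence "lin_indpt ({u} \<union> {v})" using lin_dep_iff_in_span[of "{u}" v] indu uc vc nv by auto
    moreover have "{u} \<union> {v} \<subseteq> set (cols A)" using u_def v_def A i0 j
      by (auto simp: cols_def)
    ultimately have "rank A \<ge> card ({u} \<union> {v})" using rank_ge_card_indpt[OF A] by blast
    moreover have "card ({u} \<union> {v}) = 2" using \<open>v \<noteq> u\<close> by auto
    ultimately show False using r by simp
  qed
  then obtain a where a: "lincomb a {u} = v" using finite_in_span[of "{u}" v] uc by auto
  have "lincomb a {u} = a u \<cdot>\<^sub>v u" unfolding lincomb_def using uc by simp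
  hence vu: "v = a u \<cdot>\<^sub>v u" using a by simp
  have "A $$ (i,j) = a u * A $$ (i, i0)"
    using arg_cong[OF vu, of "\<lambda>w. w $ i"] A i j i0 uc by (simp add: u_def v_def)
  moreover have "A $$ (i0,j) = a u * A $$ (i0, i0)"
    using arg_cong[OF vu, of "\<lambda>w. w $ i0"] A i j i0 uc by (simp add: u_def v_def)
  ultimately show ?thesis by simp
qed
definition mon :: "(nat \<Rightarrow> real) \<Rightarrow> mono \<Rightarrow> real" where
  "mon x \<gamma> = (\<Prod>i\<in>Poly_Mapping.keys \<gamma>. x i ^ Poly_Mapping.lookup \<gamma> i)"

lemma mon_super: "finite S \<Longrightarrow> Poly_Mapping.keys \<gamma> \<subseteq> S \<Longrightarrow>
   mon x \<gamma> = (\<Prod>i\<in>S. x i ^ Poly_Mapping.lookup \<gamma> i)"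
  unfolding mon_def by (rule prod.mono_neutral_left) (auto simp: in_keys_iff)

lemma mon_zero[simp]: "mon x 0 = 1" by (simp add: mon_def)

lemma mon_add: "mon x (\<alpha> + \<beta>) = mon x \<alpha> * mon x \<beta>"
proof -
  let ?S = "Poly_Mapping.keys \<alpha> \<union> Poly_Mapping.keys \<beta>"
  have f: "finite ?S" by simp
  have "mon x (\<alpha> + \<beta>) = (\<Prod>i\<in>?S. x i ^ Poly_Mapping.lookup (\<alpha>+\<beta>) i)"
    using keys_add[of \<alpha> \<beta>] by (intro mon_super) auto
  also have "\<dots> = (\<Prod>i\<in>?S. x i ^ Poly_Mapping.lookup \<alpha> i) * (\<Prod>i\<in>?S. x i ^ Poly_Mapping.lookup \<beta> i)"
    by (simp add: lookup_add power_add prod.distrib)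
  also have "\<dots> = mon x \<alpha> * mon x \<beta>" by (subst (1 2) mon_super[OF f]) auto
  finally show ?thesis .
qed

lemma mdeg_super: "finite S \<Longrightarrow> Poly_Mapping.keys \<gamma> \<subseteq> S \<Longrightarrow>
   mdeg \<gamma> = (\<Sum>i\<in>S. Poly_Mapping.lookup \<gamma> i)"
  unfolding mdeg_def by (rule sum.mono_neutral_left) (auto simp: in_keys_iff)

lemma mdeg_add: "mdeg (\<alpha> + \<beta>) = mdeg \<alpha> + mdeg \<beta>"
proof -
  let ?S = "Poly_Mapping.keys \<alpha> \<union> Poly_Mapping.keys \<beta>"
  have f: "finite ?S" by simp
  have "mdeg (\<alpha> + \<beta>) = (\<Sum>i\<in>?S. Poly_Mapping.lookup (\<alpha>+\<beta>) i)"
    using keys_add[of \<alpha> \<beta>] by (intro mdeg_super) auto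
  also have "\<dots> = (\<Sum>i\<in>?S. Poly_Mapping.lookup \<alpha> i) + (\<Sum>i\<in>?S. Poly_Mapping.lookup \<beta> i)"
    by (simp add: lookup_add sum.distrib)
  also have "\<dots> = mdeg \<alpha> + mdeg \<beta>" by (subst (1 2) mdeg_super[OF f]) auto
  finally show ?thesis .
qed

lemma mdeg_zero[simp]: "mdeg 0 = 0" by (simp add: mdeg_def)

lemma mdeg_single[simp]: "mdeg (Poly_Mapping.single i 1) = 1" by (simp add: mdeg_def)

lemma mdeg_single1[simp]: "mdeg (Poly_Mapping.single i (Suc 0)) = Suc 0" by (simp add: mdeg_def)

lemma mon_single1[simp]: "mon x (Poly_Mapping.single i (Suc 0)) = x i" by (simp add: mon_def)

lemma mon_single[simp]: "mon x (Poly_Mapping.single i 1) = x i" by (simp add: mon_def)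

lemma peval_mon: "peval q x = (\<Sum>\<gamma>\<in>Poly_Mapping.keys q. Poly_Mapping.lookup q \<gamma> * mon x \<gamma>)"
  by (simp add: peval_def mon_def)

lemma peval_super: "finite S \<Longrightarrow> Poly_Mapping.keys q \<subseteq> S \<Longrightarrow>
   peval q x = (\<Sum>\<gamma>\<in>S. Poly_Mapping.lookup q \<gamma> * mon x \<gamma>)"
  unfolding peval_mon by (rule sum.mono_neutral_left) (auto simp: in_keys_iff)

lemma peval_add: "peval (p + q) x = peval p x + peval q x"
proof -
  let ?S = "Poly_Mapping.keys p \<union> Poly_Mapping.keys q"
  have f: "finite ?S" by simp
  have "peval (p + q) x = (\<Sum>\<gamma>\<in>?S. Poly_Mapping.lookup (p+q) \<gamma> * mon x \<gamma>)"
    using keys_add[of p q] by (intro peval_super) auto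
  also have "\<dots> = (\<Sum>\<gamma>\<in>?S. Poly_Mapping.lookup p \<gamma> * mon x \<gamma>) + (\<Sum>\<gamma>\<in>?S. Poly_Mapping.lookup q \<gamma> * mon x \<gamma>)"
    by (simp add: lookup_add sum.distrib distrib_right)
  also have "\<dots> = peval p x + peval q x" by (subst (1 2) peval_super[OF f]) auto
  finally show ?thesis .
qed

lemma peval_zero[simp]: "peval 0 x = 0" by (simp add: peval_def)

lemma peval_diff: "peval (p - q) x = peval p x - peval q x"
  using peval_add[of "p - q" q x] by simp

lemma peval_sum: "peval (\<Sum>a\<in>A. P a) x = (\<Sum>a\<in>A. peval (P a) x)"
  by (induction A rule: infinite_finite_induct) (auto simp: peval_add)

lemma peval_single: "peval (Poly_Mapping.single a c) x = c * mon x a"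
  by (simp add: peval_mon)

lemma peval_one[simp]: "peval 1 x = 1"
  by (simp add: peval_mon)

lemma poly_sum_singles: "(p::mpoly) = (\<Sum>a\<in>Poly_Mapping.keys p. Poly_Mapping.single a (Poly_Mapping.lookup p a))"
proof (rule poly_mapping_eqI)
  fix k
  show "Poly_Mapping.lookup p k = Poly_Mapping.lookup (\<Sum>a\<in>Poly_Mapping.keys p. Poly_Mapping.single a (Poly_Mapping.lookup p a)) k"
    by (simp add: lookup_sum lookup_single when_def in_keys_iff)
qed

lemma peval_mult: "peval (p * q) x = peval p x * peval q x"
proof -
  let ?P = "Poly_Mapping.keys p" and ?Q = "Poly_Mapping.keys q"
  have "p * q = (\<Sum>a\<in>?P. Poly_Mapping.single a (Poly_Mapping.lookup p a)) *
                (\<Sum>b\<in>?Q. Poly_Mapping.single b (Poly_Mapping.lookup q b))"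
    by (subst (1) poly_sum_singles[of p], subst (1) poly_sum_singles[of q]) simp
  also have "\<dots> = (\<Sum>a\<in>?P. \<Sum>b\<in>?Q. Poly_Mapping.single (a+b) (Poly_Mapping.lookup p a * Poly_Mapping.lookup q b))"
    by (simp add: sum_distrib_left sum_distrib_right mult_single) (rule sum.swap)
  finally have "peval (p * q) x = (\<Sum>a\<in>?P. \<Sum>b\<in>?Q. (Poly_Mapping.lookup p a * mon x a) * (Poly_Mapping.lookup q b * mon x b))"
    by (simp add: peval_sum peval_single mon_add algebra_simps)
  also have "\<dots> = peval p x * peval q x"
    by (simp add: peval_mon sum_product)
  finally show ?thesis .
qed

lemma peval_power: "peval (p ^ n) x = peval p x ^ n"
  by (induction n) (auto simp: peval_mult)

lemma peval_prod: "peval (\<Prod>a\<in>A. P a) x = (\<Prod>a\<in>A. peval (P a) x)"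
  by (induction A rule: infinite_finite_induct) (auto simp: peval_mult)

lemma Lfun_mon: "Lfun (mon x) q = peval q x"
  by (simp add: Lfun_def peval_mon)

lemma Lfun_eval: "(\<And>\<gamma>. \<gamma> \<in> Poly_Mapping.keys q \<Longrightarrow> \<theta> \<gamma> = mon x \<gamma>) \<Longrightarrow> Lfun \<theta> q = peval q x"
  by (simp add: Lfun_def peval_mon)

lemma Iset_finite: assumes "finite I" shows "finite (Iset I D)"
proof -
  have "inj_on (\<lambda>\<gamma>. restrict (Poly_Mapping.lookup \<gamma>) I) (Iset I D)"
  proof (rule inj_onI)
    fix a b assume a: "a \<in> Iset I D" and b: "b \<in> Iset I D"
      and e: "restrict (Poly_Mapping.lookup a) I = restrict (Poly_Mapping.lookup b) I"
    show "a = b"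
    proof (rule poly_mapping_eqI)
      fix k show "Poly_Mapping.lookup a k = Poly_Mapping.lookup b k"
      proof (cases "k \<in> I")
        case True thus ?thesis using fun_cong[OF e, of k] by simp
      next
        case False thus ?thesis using a b unfolding Iset_def by (metis (mono_tags) in_keys_iff mem_Collect_eq subsetD)
      qed
    qed
  qed
  moreover have "(\<lambda>\<gamma>. restrict (Poly_Mapping.lookup \<gamma>) I) ` Iset I D \<subseteq> PiE I (\<lambda>_. {0..D})"
  proof clarsimp
    fix \<gamma> i assume g: "\<gamma> \<in> Iset I D" and i: "i \<in> I"
    have "Poly_Mapping.lookup \<gamma> i \<le> mdeg \<gamma>"
    proof (cases "i \<in> Poly_Mapping.keys \<gamma>")
      case True thus ?thesis unfolding mdeg_def by (intro member_le_sum) auto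
    qed (auto simp: in_keys_iff)
    thus "Poly_Mapping.lookup \<gamma> i \<le> D" using g by (auto simp: Iset_def)
  qed
  moreover have "finite (PiE I (\<lambda>_. {0..D::nat}))" using assms by (intro finite_PiE) auto
  ultimately show ?thesis by (meson finite_imageD finite_subset)
qed

lemma split_single: "i \<in> Poly_Mapping.keys (\<beta>::mono) \<Longrightarrow> \<beta> = (\<beta> - Poly_Mapping.single i 1) + Poly_Mapping.single i 1"
  by (rule poly_mapping_eqI) (auto simp: lookup_add lookup_minus lookup_single when_def in_keys_iff)

lemma keys_of_sum: "\<gamma> = (\<alpha>::mono) + \<beta> \<Longrightarrow> Poly_Mapping.keys \<alpha> \<subseteq> Poly_Mapping.keys \<gamma> \<and> Poly_Mapping.keys \<beta> \<subseteq> Poly_Mapping.keys \<gamma>"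
  by (auto simp: in_keys_iff lookup_add)

lemma mdeg_split: "a \<le> mdeg \<gamma> \<Longrightarrow> \<exists>\<alpha> \<beta>. \<gamma> = \<alpha> + \<beta> \<and> mdeg \<alpha> = a"
proof (induction a)
  case 0 show ?case by (rule exI[of _ 0], rule exI[of _ \<gamma>]) simp
next
  case (Suc a)
  then obtain \<alpha> \<beta> where ab: "\<gamma> = \<alpha> + \<beta>" "mdeg \<alpha> = a" by auto
  hence "mdeg \<beta> \<ge> 1" using Suc.prems mdeg_add[of \<alpha> \<beta>] by simp
  hence "\<beta> \<noteq> 0" by (auto)
  then obtain i where i: "i \<in> Poly_Mapping.keys \<beta>" by fastforce
  define \<beta>' where "\<beta>' = \<beta> - Poly_Mapping.single i 1"
  have b: "\<beta> = \<beta>' + Poly_Mapping.single i 1" using split_single[OF i] \<beta>'_def by simp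
  show ?case
    apply (rule exI[of _ "\<alpha> + Poly_Mapping.single i 1"], rule exI[of _ \<beta>'])
    using ab b by (simp add: mdeg_add ac_simps)
qed

lemma mdeg_le_pdeg: "\<gamma> \<in> Poly_Mapping.keys q \<Longrightarrow> mdeg \<gamma> \<le> pdeg q"
  unfolding pdeg_def by (rule Max_ge) auto

theorem mainTheorem5:
  fixes n m p k d :: nat
    and f :: mpoly and g :: "nat \<Rightarrow> mpoly"
    and I J :: "nat \<Rightarrow> nat set" and fl :: "nat \<Rightarrow> mpoly"
    and \<theta> :: "nat \<Rightarrow> mono \<Rightarrow> real" and y :: "mono \<Rightarrow> real"
  assumes p_pos: "p \<ge> 1" and k_pos: "k \<ge> 1" and d_pos: "d \<ge> 1"
    and I_sub: "\<forall>l\<in>{1..p}. I l \<subseteq> {1..n}"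
    and J_sub: "\<forall>l\<in>{1..p}. J l \<subseteq> {1..m}"
    and f_split: "f = (\<Sum>l\<in>{1..p}. fl l)"
    and fl_vars: "\<forall>l\<in>{1..p}. pvars (fl l) \<subseteq> I l"
    and g_vars: "\<forall>l\<in>{1..p}. \<forall>j\<in>J l. pvars (g j) \<subseteq> I l"
    and I_cover: "(\<Union>l\<in>{1..p}. I l) = {1..n}"
    and J_cover: "(\<Union>l\<in>{1..p}. J l) = {1..m}"
    and RIP: "\<forall>l\<in>{1..<p}. \<exists>s\<in>{1..l}. I (l + 1) \<inter> (\<Union>r\<in>{1..l}. I r) \<subseteq> I s"
    and omega_le: "2 * omega m f g \<le> dmax f g m k d"
    and feas: "dual_feasible p I J f g m k d \<theta> y"
    and opt: "ereal (Lfun y f) = qtilde p I J f g m k d"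
    and rank1: "\<forall>l\<in>{1..p}. mom_rank (I l) (omega m f g) (\<theta> l) = 1"
  shows "qtilde p I J f g m k d = fstar n m f g
    \<and> (\<lambda>i. if i \<in> {1..n} then y (Poly_Mapping.single i 1) else 0) \<in> Kset n m g
    \<and> ereal (peval f (\<lambda>i. if i \<in> {1..n} then y (Poly_Mapping.single i 1) else 0)) = fstar n m f g"
proof -
  define \<omega> where "\<omega> = omega m f g"
  define D where "D = dmax f g m k d"
  define xs where "xs = (\<lambda>i. if i \<in> {1..n} then y (Poly_Mapping.single i 1) else 0)"
  have feasD: "\<And>l \<gamma>. l \<in> {1..p} \<Longrightarrow> \<gamma> \<in> Iset (I l) D \<Longrightarrow> y \<gamma> = \<theta> l \<gamma>"
    "y 0 = 1"
    "\<And>l \<alpha> \<beta>. l \<in> {1..p} \<Longrightarrow> (\<alpha>, \<beta>) \<in> Nset (J l) d \<Longrightarrow> 0 \<le> Lfun (\<theta> l) (hab m g \<alpha> \<beta>)"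
    using feas unfolding dual_feasible_def D_def by auto
  have degs: "pdeg f \<le> 2 * \<omega> \<and> (\<forall>j\<in>{1..m}. pdeg (g j) \<le> 2 * \<omega>)"
  proof -
    define M where "M = max (pdeg f) (Max (insert 0 (pdeg ` g ` {1..m})))"
    have "M \<le> 2 * \<omega>" unfolding \<omega>_def omega_def M_def[symmetric]
      by (rule LeastI[of "\<lambda>w. M \<le> 2 * w" M]) simp
    moreover have "\<forall>j\<in>{1..m}. pdeg (g j) \<le> Max (insert 0 (pdeg ` g ` {1..m}))"
      by (auto intro: Max_ge)
    ultimately show ?thesis unfolding M_def by fastforce
  qed
  have wD: "2 * \<omega> \<le> D" using omega_le \<omega>_def D_def by simp
  have dirac: "\<And>l \<gamma>. l \<in> {1..p} \<Longrightarrow> Poly_Mapping.keys \<gamma> \<subseteq> I l \<Longrightarrow> mdeg \<gamma> \<le> 2 * \<omega> \<Longrightarrow> \<theta> l \<gamma> = mon xs \<gamma>"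
  proof -
    fix l assume l: "l \<in> {1..p}"
    have Il: "I l \<subseteq> {1..n}" using I_sub l by auto
    have finI: "finite (I l)" using Il finite_subset by blast
    have th0: "\<theta> l 0 = 1" using feasD(1)[OF l, of 0] feasD(2) by (simp add: Iset_def)
    let ?S = "Iset (I l) \<omega>"
    have finS: "finite ?S" using Iset_finite[OF finI] .
    define L where "L = sorted_list_of_set ?S"
    have setL: "set L = ?S" and distL: "distinct L" and lenL: "length L = card ?S"
      using finS by (auto simp: L_def)
    define A where "A = mom_mat (I l) \<omega> (\<theta> l)"
    have A_eq: "A = mat (card ?S) (card ?S) (\<lambda>(i, j). \<theta> l (L ! i + L ! j))"
      unfolding A_def mom_mat_def L_def[symmetric] Let_def lenL ..
    have Aent: "\<And>a b. a < card ?S \<Longrightarrow> b < card ?S \<Longrightarrow> A $$ (a,b) = \<theta> l (L!a + L!b)"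
      unfolding A_eq by simp
    have Ac: "A \<in> carrier_mat (card ?S) (card ?S)" by (simp add: A_eq)
    have rk: "vec_space.rank (card ?S) A = 1" using rank1 l unfolding mom_rank_def A_def \<omega>_def by auto
    have z: "0 \<in> ?S" by (simp add: Iset_def)
    obtain i0 where i0: "i0 < card ?S" "L ! i0 = 0" using z setL lenL by (metis in_set_conv_nth)
    have mult: "\<And>\<alpha> \<beta>. \<alpha> \<in> ?S \<Longrightarrow> \<beta> \<in> ?S \<Longrightarrow> \<theta> l (\<alpha> + \<beta>) = \<theta> l \<alpha> * \<theta> l \<beta>"
    proof -
      fix \<alpha> \<beta> assume a: "\<alpha> \<in> ?S" and b: "\<beta> \<in> ?S"
      obtain i where i: "i < card ?S" "L ! i = \<alpha>" using a setL lenL by (metis in_set_conv_nth)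
      obtain j where j: "j < card ?S" "L ! j = \<beta>" using b setL lenL by (metis in_set_conv_nth)
      note ij = i j
      have "A $$ (i0,i0) = \<theta> l (0 + 0)" by (simp only: Aent[OF i0(1) i0(1)] i0(2))
      hence nz: "A $$ (i0,i0) \<noteq> 0" using th0 by simp
      have "A $$ (i,j) * A $$ (i0,i0) = A $$ (i,i0) * A $$ (i0,j)"
        by (rule rank1_entries[OF Ac rk i0(1) nz i(1) j(1)])
      hence "\<theta> l (\<alpha> + \<beta>) * \<theta> l (0 + 0) = \<theta> l (\<alpha> + 0) * \<theta> l (0 + \<beta>)"
        by (simp only: Aent[OF i(1) j(1)] Aent[OF i0(1) i0(1)] Aent[OF i(1) i0(1)] Aent[OF i0(1) j(1)] i0(2) i(2) j(2))
      thus "\<theta> l (\<alpha> + \<beta>) = \<theta> l \<alpha> * \<theta> l \<beta>"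
        using th0 by simp
    qed
    have low: "\<And>N \<alpha>. mdeg \<alpha> = N \<Longrightarrow> \<alpha> \<in> ?S \<Longrightarrow> \<theta> l \<alpha> = mon xs \<alpha>"
    proof -
      fix N show "\<And>\<alpha>. mdeg \<alpha> = N \<Longrightarrow> \<alpha> \<in> ?S \<Longrightarrow> \<theta> l \<alpha> = mon xs \<alpha>"
      proof (induction N)
        case 0
        hence "\<forall>i\<in>Poly_Mapping.keys \<alpha>. Poly_Mapping.lookup \<alpha> i = 0"
          unfolding mdeg_def by simp
        hence "\<alpha> = 0" by (metis in_keys_iff keys_eq_empty all_not_in_conv)
        thus ?case using th0 by simp
      next
        case (Suc N)
        have "\<alpha> \<noteq> 0"
        proof
          assume "\<alpha> = 0" with Suc.prems(1) show False by simp
        qed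
        then obtain i where i: "i \<in> Poly_Mapping.keys \<alpha>" by (metis all_not_in_conv keys_eq_empty)
        define \<alpha>' where "\<alpha>' = \<alpha> - Poly_Mapping.single i 1"
        have a: "\<alpha> = \<alpha>' + Poly_Mapping.single i 1" using split_single[OF i] \<alpha>'_def by simp
        have mda: "mdeg \<alpha>' = N" using a Suc.prems(1) mdeg_add[of \<alpha>' "Poly_Mapping.single i 1"] by simp
        have ka: "Poly_Mapping.keys \<alpha>' \<subseteq> I l" "i \<in> I l"
          using keys_of_sum[OF a] Suc.prems(2) i by (auto simp: Iset_def)
        have a'S: "\<alpha>' \<in> ?S" using ka mda Suc.prems by (auto simp: Iset_def)
        have sS: "Poly_Mapping.single i 1 \<in> ?S" using ka Suc.prems by (auto simp: Iset_def)
        have "\<theta> l (Poly_Mapping.single i 1) = y (Poly_Mapping.single i 1)"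
          using feasD(1)[OF l, of "Poly_Mapping.single i 1"] ka Suc.prems wD by (auto simp: Iset_def)
        also have "\<dots> = xs i" using ka Il by (auto simp: xs_def)
        finally have ts: "\<theta> l (Poly_Mapping.single i 1) = xs i" .
        have t1: "\<theta> l \<alpha> = \<theta> l \<alpha>' * \<theta> l (Poly_Mapping.single i 1)"
          by (subst a) (rule mult[OF a'S sS])
        have t2: "mon xs \<alpha> = mon xs \<alpha>' * xs i"
          by (subst a) (simp add: mon_add)
        show ?case unfolding t1 t2 ts Suc.IH[OF mda a'S] ..
      qed
    qed
    fix \<gamma> assume k: "Poly_Mapping.keys \<gamma> \<subseteq> I l" and dg: "mdeg \<gamma> \<le> 2 * \<omega>"
    obtain \<alpha> \<beta> where ab: "\<gamma> = \<alpha> + \<beta>" "mdeg \<alpha> = min \<omega> (mdeg \<gamma>)"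
      using mdeg_split[of "min \<omega> (mdeg \<gamma>)" \<gamma>] by auto
    have "mdeg \<beta> \<le> \<omega>" using ab dg mdeg_add[of \<alpha> \<beta>] by simp
    hence aS: "\<alpha> \<in> ?S" and bS: "\<beta> \<in> ?S" using ab k keys_of_sum[OF ab(1)] by (auto simp: Iset_def)
    show "\<theta> l \<gamma> = mon xs \<gamma>" using mult[OF aS bS] low[OF refl aS] low[OF refl bS] ab(1)
      by (simp add: mon_add)
  qed
  have val: "Lfun y f = peval f xs"
  proof (rule Lfun_eval)
    fix \<gamma> assume g: "\<gamma> \<in> Poly_Mapping.keys f"
    hence "(\<Sum>l\<in>{1..p}. Poly_Mapping.lookup (fl l) \<gamma>) \<noteq> 0"
      by (simp add: f_split lookup_sum in_keys_iff)
    then obtain l where l: "l \<in> {1..p}" and gl: "\<gamma> \<in> Poly_Mapping.keys (fl l)"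
      by (meson in_keys_iff sum.neutral)
    have k: "Poly_Mapping.keys \<gamma> \<subseteq> I l" using fl_vars l gl unfolding pvars_def by blast
    have dg: "mdeg \<gamma> \<le> 2 * \<omega>" using mdeg_le_pdeg[OF g] degs by simp
    have "y \<gamma> = \<theta> l \<gamma>" using feasD(1)[OF l, of \<gamma>] k dg wD by (auto simp: Iset_def)
    thus "y \<gamma> = mon xs \<gamma>" using dirac[OF l k dg] by simp
  qed
  have xsK: "xs \<in> Kset n m g"
    unfolding Kset_def
  proof (intro CollectI conjI allI impI ballI)
    fix i assume h: "i \<notin> {1..n}" show "xs i = 0" unfolding xs_def using h by auto
  next
    fix j assume j: "j \<in> {1..m}"
    then obtain l where l: "l \<in> {1..p}" and jl: "j \<in> J l" using J_cover by blast
    have finJ: "finite (J l)" using J_sub l finite_subset by blast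
    have ev: "\<And>q. (\<And>\<gamma>. \<gamma> \<in> Poly_Mapping.keys q \<Longrightarrow> Poly_Mapping.keys \<gamma> \<subseteq> I l \<and> mdeg \<gamma> \<le> 2 * \<omega>)
      \<Longrightarrow> Lfun (\<theta> l) q = peval q xs"
      by (rule Lfun_eval) (use dirac[OF l] in blast)
    have gk: "\<And>\<gamma>. \<gamma> \<in> Poly_Mapping.keys (g j) \<Longrightarrow> Poly_Mapping.keys \<gamma> \<subseteq> I l \<and> mdeg \<gamma> \<le> 2 * \<omega>"
    proof
      fix \<gamma> assume g: "\<gamma> \<in> Poly_Mapping.keys (g j)"
      show "Poly_Mapping.keys \<gamma> \<subseteq> I l" using g_vars l jl g unfolding pvars_def by blast
      show "mdeg \<gamma> \<le> 2 * \<omega>" using mdeg_le_pdeg[OF g] degs j by force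
    qed
    have e1: "Lfun (\<theta> l) (g j) = peval (g j) xs" by (rule ev[OF gk])
    have e2: "Lfun (\<theta> l) (1 - g j) = peval (1 - g j) xs"
    proof (rule ev)
      fix \<gamma> assume "\<gamma> \<in> Poly_Mapping.keys (1 - g j)"
      hence "\<gamma> = 0 \<or> \<gamma> \<in> Poly_Mapping.keys (g j)" using keys_diff[of 1 "g j"] by auto
      thus "Poly_Mapping.keys \<gamma> \<subseteq> I l \<and> mdeg \<gamma> \<le> 2 * \<omega>" using gk by auto
    qed
    define e where "e = (\<lambda>j'::nat. if j' = j then 1 else (0::nat))"
    have eN: "(e, \<lambda>_. 0) \<in> Nset (J l) d" "(\<lambda>_. 0, e) \<in> Nset (J l) d"
      using jl finJ d_pos by (auto simp: Nset_def e_def)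
    have h1: "hab m g e (\<lambda>_. 0) = g j"
    proof -
      have "hab m g e (\<lambda>_. 0) = (\<Prod>j'\<in>{1..m}. if j' = j then g j' else 1)"
        unfolding hab_def by (rule prod.cong) (auto simp: e_def)
      thus ?thesis using j by simp
    qed
    have h2: "hab m g (\<lambda>_. 0) e = 1 - g j"
    proof -
      have "hab m g (\<lambda>_. 0) e = (\<Prod>j'\<in>{1..m}. if j' = j then 1 - g j' else 1)"
        unfolding hab_def by (rule prod.cong) (auto simp: e_def)
      thus ?thesis using j by simp
    qed
    show "0 \<le> peval (g j) xs" using feasD(3)[OF l eN(1)] h1 e1 by simp
    show "peval (g j) xs \<le> 1" using feasD(3)[OF l eN(2)] h2 e2 by (simp add: peval_diff)
  qed
  have le: "qtilde p I J f g m k d \<le> fstar n m f g"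
    unfolding fstar_def
  proof (rule INF_greatest)
    fix x assume x: "x \<in> Kset n m g"
    have gx: "\<And>j. j \<in> {1..m} \<Longrightarrow> 0 \<le> peval (g j) x \<and> peval (g j) x \<le> 1"
      using x by (auto simp: Kset_def)
    have "dual_feasible p I J f g m k d (\<lambda>l. mon x) (mon x)"
      unfolding dual_feasible_def
    proof (intro conjI ballI)
      show "mon x 0 = 1" by simp
    next
      fix l assume "l \<in> {1..p}"
      show "mom_psd (I l) k (mon x)" unfolding mom_psd_def
      proof
        fix v :: "mono \<Rightarrow> real"
        have "(\<Sum>\<alpha>\<in>Iset (I l) k. \<Sum>\<beta>\<in>Iset (I l) k. v \<alpha> * mon x (\<alpha> + \<beta>) * v \<beta>)
           = (\<Sum>\<alpha>\<in>Iset (I l) k. v \<alpha> * mon x \<alpha>) * (\<Sum>\<beta>\<in>Iset (I l) k. v \<beta> * mon x \<beta>)"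
          by (simp add: mon_add sum_product algebra_simps)
        thus "0 \<le> (\<Sum>\<alpha>\<in>Iset (I l) k. \<Sum>\<beta>\<in>Iset (I l) k. v \<alpha> * mon x (\<alpha> + \<beta>) * v \<beta>)"
          by simp
      qed
    next
      fix l ab assume "l \<in> {1..p}" "ab \<in> Nset (J l) d"
      obtain a b where ab: "ab = (a, b)" by fastforce
      have "0 \<le> Lfun (mon x) (hab m g a b)"
        unfolding Lfun_mon hab_def peval_prod
        by (rule prod_nonneg) (use gx in \<open>auto simp: peval_mult peval_power peval_diff\<close>)
      thus "case ab of (\<alpha>, \<beta>) \<Rightarrow> 0 \<le> Lfun (mon x) (hab m g \<alpha> \<beta>)" using ab by simp
    qed (auto)
    hence "qtilde p I J f g m k d \<le> ereal (Lfun (mon x) f)"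
      unfolding qtilde_def by (intro INF_lower2[of "(\<lambda>l. mon x, mon x)"]) auto
    thus "qtilde p I J f g m k d \<le> ereal (peval f x)" by (simp add: Lfun_mon)
  qed
  have ge: "fstar n m f g \<le> ereal (peval f xs)"
    unfolding fstar_def by (rule INF_lower[OF xsK])
  have eq: "qtilde p I J f g m k d = ereal (peval f xs)" using opt val by simp
  show ?thesis using le ge eq xsK unfolding xs_def[symmetric] by simp
qed

end
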